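(* Let $1\le p<\infty$, $N\ge2$, and for $1\le i\le N$ let $T_i$ be the unilateral weighted backward shift on $\ell^p(\mathbb{N})$ with weight sequence $(w^{(i)}_m)_{m\in\mathbb{N}}$. If $T_1,\dots,T_N$ are s-hypercyclic, then the direct sum $T_1\oplus\cdots\oplus T_N$ is hypercyclic on $\oplus_{i=1}^N\ell^p(\mathbb{N})$.
   Context: $\{e_m\}$ is the canonical basis of $\ell^p(\mathbb{N})$ over $\mathbb{K}\in\{\mathbb{R},\mathbb{C}\}$. The unilateral weighted backward shift with bounded weight sequence $(w_m)$ is $Te_m=w_me_{m-1}$ for $m\ge2$, $Te_1=0$. Operators $T_1,\dots,T_N$ on $X$ are s-hypercyclic if some $x\in X$ has the closure of $\{(T_1^nx,\dots,T_N^nx):n\in\mathbb{N}\}$ containing the diagonal $\{(y,\dots,y):y\in X\}$ of $\oplus_{i=1}^NX$. An operator is hypercyclic if some vector has dense orbit. *)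

theory Defs
  imports "HOL-Analysis.Analysis"
begin

text \<open>Sequences are indexed by nat; the coordinate 0 is a dummy coordinate forced to be 0,
  so that coordinates 1,2,3,... correspond to the canonical basis e_1, e_2, ... of
  l^p(N) with N = {1,2,...}.\<close>

definition lp_space :: "real \<Rightarrow> (nat \<Rightarrow> 'a::real_normed_vector) set" where
  "lp_space p = {x. x 0 = 0 \<and> summable (\<lambda>m. norm (x m) powr p)}"

definition lp_norm :: "real \<Rightarrow> (nat \<Rightarrow> 'a::real_normed_vector) \<Rightarrow> real" where
  "lp_norm p x = (\<Sum>m. norm (x m) powr p) powr (1 / p)"

definition lp_dist :: "real \<Rightarrow> (nat \<Rightarrow> 'a::real_normed_vector) \<Rightarrow> (nat \<Rightarrow> 'a) \<Rightarrow> real" where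
  "lp_dist p x y = lp_norm p (\<lambda>m. x m - y m)"

text \<open>Unilateral weighted backward shift: T e_m = w_m e_(m-1) for m \<ge> 2, T e_1 = 0.\<close>
definition wshift :: "(nat \<Rightarrow> 'a::real_normed_field) \<Rightarrow> (nat \<Rightarrow> 'a) \<Rightarrow> (nat \<Rightarrow> 'a)" where
  "wshift w x = (\<lambda>m. if m = 0 then 0 else w (m + 1) * x (m + 1))"

definition lp_hypercyclic :: "real \<Rightarrow> ((nat \<Rightarrow> 'a::real_normed_vector) \<Rightarrow> (nat \<Rightarrow> 'a)) \<Rightarrow> bool" where
  "lp_hypercyclic p T \<longleftrightarrow>
     (\<exists>x\<in>lp_space p. \<forall>y\<in>lp_space p. \<forall>\<epsilon>>0. \<exists>n. lp_dist p ((T ^^ n) x) y < \<epsilon>)"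

text \<open>Operators T_i (i in I, I finite) on l^p are s-hypercyclic: some x has the closure of
  {(T_i^n x)_i : n} containing the diagonal of the direct sum (product topology).\<close>
definition lp_s_hypercyclic ::
  "real \<Rightarrow> nat set \<Rightarrow> (nat \<Rightarrow> (nat \<Rightarrow> 'a::real_normed_vector) \<Rightarrow> (nat \<Rightarrow> 'a)) \<Rightarrow> bool" where
  "lp_s_hypercyclic p I T \<longleftrightarrow>
     (\<exists>x\<in>lp_space p. \<forall>y\<in>lp_space p. \<forall>\<epsilon>>0. \<exists>n.
        \<forall>i\<in>I. lp_dist p ((T i ^^ n) x) y < \<epsilon>)"

text \<open>The direct sum of the T_i (i in I, I finite) is hypercyclic on the direct sum of
  copies of l^p (product topology, e.g. given by the max of the l^p distances).\<close>
definition lp_dsum_hypercyclic ::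
  "real \<Rightarrow> nat set \<Rightarrow> (nat \<Rightarrow> (nat \<Rightarrow> 'a::real_normed_vector) \<Rightarrow> (nat \<Rightarrow> 'a)) \<Rightarrow> bool" where
  "lp_dsum_hypercyclic p I T \<longleftrightarrow>
     (\<exists>x. (\<forall>i\<in>I. x i \<in> lp_space p) \<and>
        (\<forall>y. (\<forall>i\<in>I. y i \<in> lp_space p) \<longrightarrow> (\<forall>\<epsilon>>0. \<exists>n.
          \<forall>i\<in>I. lp_dist p ((T i ^^ n) (x i)) (y i) < \<epsilon>)))"

end

theory Submission imports Defs "HOL-Library.Countable_Set" "HOL-Library.Nat_Bijection" begin

definition Rw :: "(nat \<Rightarrow> 'a::real_normed_field) \<Rightarrow> nat \<Rightarrow> 'a" where
  "Rw w a = (\<Prod>\<nu>\<in>{2..a}. w \<nu>)"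

definition Pw :: "(nat \<Rightarrow> 'a::real_normed_field) \<Rightarrow> nat \<Rightarrow> nat \<Rightarrow> 'a" where
  "Pw w j n = (\<Prod>\<nu>\<in>{j+1..j+n}. w \<nu>)"

lemma funpow_wshift:
  assumes "x 0 = 0"
  shows "(wshift w ^^ n) x = (\<lambda>j. if j = 0 then 0 else Pw w j n * x (j + n))"
proof (induction n)
  case 0
  show ?case using assms by (auto simp: Pw_def)
next
  case (Suc n)
  have e: "w (j+1) * Pw w (j+1) n = Pw w j (Suc n)" for j
    unfolding Pw_def by (subst prod.atLeast_Suc_atMost[of "j+1" "j + Suc n"]) (auto simp: add.commute)
  have "(wshift w ^^ Suc n) x = wshift w ((wshift w ^^ n) x)" by simp
  also have "\<dots> = (\<lambda>j. if j = 0 then 0 else Pw w j (Suc n) * x (j + Suc n))"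
    unfolding Suc wshift_def by (rule ext) (simp add: e[symmetric] mult.assoc)
  finally show ?case .
qed

lemma Rw_mult_Pw: "1 \<le> j \<Longrightarrow> Rw w j * Pw w j n = Rw w (j + n)"
  unfolding Rw_def Pw_def using prod.ub_add_nat[of 2 j w n] by simp

lemma Pw_1: "Pw w 1 n = Rw w (n + 1)"
  unfolding Rw_def Pw_def by (simp only: one_add_one add.commute)

lemma norm_prod_interval_le:
  assumes "\<And>\<nu>. norm (w \<nu>) \<le> W" "1 \<le> W"
  shows "norm (\<Prod>\<nu>\<in>{a..b::nat}. (w \<nu>::'a::real_normed_field)) \<le> W ^ (b + 1 - a)"
proof -
  have "norm (\<Prod>\<nu>\<in>{a..b}. w \<nu>) = (\<Prod>\<nu>\<in>{a..b}. norm (w \<nu>))" by (simp add: prod_norm)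
  also have "\<dots> \<le> W ^ (b + 1 - a)"
    by (rule prod_le_power) (use assms in auto)
  finally show ?thesis .
qed

lemma norm_Rw_le:
  assumes "\<And>\<nu>. norm (w \<nu>) \<le> W" "1 \<le> W"
  shows "norm (Rw w a) \<le> W ^ a"
proof -
  have "norm (Rw w a) \<le> W ^ (a + 1 - 2)" unfolding Rw_def by (rule norm_prod_interval_le[OF assms])
  also have "\<dots> \<le> W ^ a" by (rule power_increasing) (use assms in auto)
  finally show ?thesis .
qed

lemma norm_Pw_le:
  assumes "\<And>\<nu>. norm (w \<nu>) \<le> W" "1 \<le> W"
  shows "norm (Pw w j n) \<le> W ^ n"
proof -
  have "norm (\<Prod>\<nu>\<in>{j+1..j+n}. w \<nu>) \<le> W ^ (j+n+1-(j+1))" by (rule norm_prod_interval_le[OF assms])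
  then show ?thesis by (simp add: Pw_def)
qed

lemma norm_Rw_mono:
  assumes "\<And>\<nu>. norm (w \<nu>) \<le> W" "1 \<le> W" "a \<le> b"
  shows "norm (Rw w b) \<le> norm (Rw w a) * W ^ (b - a)"
proof (cases "a = 0")
  case True
  have "Rw w 0 = 1" by (simp add: Rw_def)
  then show ?thesis using True norm_Rw_le[OF assms(1,2), where a=b] by simp
next
  case False
  then have "Rw w b = Rw w a * Pw w a (b - a)" using Rw_mult_Pw[where j=a and w=w and n="b - a"] assms(3) by simp
  then show ?thesis using norm_Pw_le[OF assms(1,2), where j=a and n="b - a"]
    by (simp add: norm_mult mult_left_mono)
qed

lemma powr_add_le:
  fixes u v p :: real
  assumes "0 \<le> u" "0 \<le> v" "0 < p"
  shows "(u + v) powr p \<le> 2 powr p * (u powr p + v powr p)"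
proof -
  have "(u + v) powr p \<le> (2 * max u v) powr p"
    by (rule powr_mono2) (use assms in auto)
  also have "\<dots> = 2 powr p * max u v powr p" using assms by (simp add: powr_mult)
  also have "max u v powr p \<le> u powr p + v powr p"
    by (cases "u \<le> v") (auto simp: max_def)
  then have "2 powr p * max u v powr p \<le> 2 powr p * (u powr p + v powr p)" by simp
  finally show ?thesis .
qed

lemma norm_diff_powr_le:
  fixes a b c :: "'a::real_normed_vector"
  assumes "0 < p"
  shows "norm (a - c) powr p \<le> 2 powr p * (norm (a - b) powr p + norm (b - c) powr p)"
proof -
  have "norm (a - c) powr p \<le> (norm (a - b) + norm (b - c)) powr p"
    by (rule powr_mono2) (use assms norm_triangle_ineq[of "a-b" "b-c"] in auto)
  also have "\<dots> \<le> 2 powr p * (norm (a - b) powr p + norm (b - c) powr p)"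
    by (rule powr_add_le) (use assms in auto)
  finally show ?thesis .
qed

lemma summable_diff_powr:
  fixes a c :: "nat \<Rightarrow> 'a::real_normed_vector"
  assumes "0 < p" "summable (\<lambda>m. norm (a m - b m) powr p)" "summable (\<lambda>m. norm (b m - c m) powr p)"
  shows "summable (\<lambda>m. norm (a m - c m) powr p)"
    and "(\<Sum>m. norm (a m - c m) powr p) \<le> 2 powr p * ((\<Sum>m. norm (a m - b m) powr p) + (\<Sum>m. norm (b m - c m) powr p))"
proof -
  have s: "summable (\<lambda>m. 2 powr p * (norm (a m - b m) powr p + norm (b m - c m) powr p))"
    using assms by (intro summable_mult summable_add)
  show 1: "summable (\<lambda>m. norm (a m - c m) powr p)"
    by (rule summable_comparison_test'[OF s, of 0]) (use norm_diff_powr_le[OF assms(1)] in auto)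
  have "(\<Sum>m. norm (a m - c m) powr p) \<le> (\<Sum>m. 2 powr p * (norm (a m - b m) powr p + norm (b m - c m) powr p))"
    by (rule suminf_le[OF _ 1 s]) (use norm_diff_powr_le[OF assms(1)] in auto)
  also have "\<dots> = 2 powr p * ((\<Sum>m. norm (a m - b m) powr p) + (\<Sum>m. norm (b m - c m) powr p))"
    using assms by (simp add: suminf_mult[symmetric] suminf_add summable_add)
  finally show "(\<Sum>m. norm (a m - c m) powr p) \<le> 2 powr p * ((\<Sum>m. norm (a m - b m) powr p) + (\<Sum>m. norm (b m - c m) powr p))" .
qed

lemma norm_le_lp_norm:
  fixes v :: "nat \<Rightarrow> 'a::real_normed_vector"
  assumes "0 < p" "summable (\<lambda>m. norm (v m) powr p)"
  shows "norm (v j) \<le> lp_norm p v"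
proof -
  have h: "norm (v j) powr p \<le> (\<Sum>m. norm (v m) powr p)"
    using sum_le_suminf[OF assms(2), of "{j}"] by simp
  have "(norm (v j) powr p) powr (1/p) \<le> (\<Sum>m. norm (v m) powr p) powr (1/p)"
    using powr_mono2[OF _ _ h, of "1/p"] assms by auto
  then show ?thesis using assms by (simp add: lp_norm_def powr_powr)
qed

lemma lp_dist_less:
  fixes u v :: "nat \<Rightarrow> 'a::real_normed_vector"
  assumes "0 < p" "0 < e" "(\<Sum>m. norm (u m - v m) powr p) < e powr p" "summable (\<lambda>m. norm (u m - v m) powr p)"
  shows "lp_dist p u v < e"
proof -
  have nn: "0 \<le> (\<Sum>m. norm (u m - v m) powr p)" using assms(4) by (auto intro: suminf_nonneg)
  have "lp_dist p u v = (\<Sum>m. norm (u m - v m) powr p) powr (1/p)" by (simp add: lp_dist_def lp_norm_def)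
  also have "\<dots> < (e powr p) powr (1/p)"
    by (rule powr_less_mono2) (use assms nn in auto)
  also have "\<dots> = e" using assms by (simp add: powr_powr)
  finally show ?thesis .
qed


lemma shift_lp:
  fixes x :: "nat \<Rightarrow> 'a::real_normed_field"
  assumes p: "0 < p" and wb: "\<And>\<nu>. norm (w \<nu>) \<le> W" and W: "1 \<le> W" and x: "x \<in> lp_space p"
  shows "(wshift w ^^ n) x \<in> lp_space p"
proof -
  have x0: "x 0 = 0" and xs: "summable (\<lambda>m. norm (x m) powr p)" using x by (auto simp: lp_space_def)
  have le: "norm ((wshift w ^^ n) x j) powr p \<le> (W ^ n) powr p * norm (x (j + n)) powr p" for j
  proof (cases "j = 0")
    case True then show ?thesis using p by (simp add: funpow_wshift[where x=x, OF x0])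
  next
    case False
    have "norm ((wshift w ^^ n) x j) = norm (Pw w j n) * norm (x (j + n))"
      using False by (simp add: funpow_wshift[where x=x, OF x0] norm_mult)
    also have "\<dots> \<le> W ^ n * norm (x (j + n))"
      by (rule mult_right_mono[OF norm_Pw_le[OF wb W]]) simp
    finally have "norm ((wshift w ^^ n) x j) powr p \<le> (W ^ n * norm (x (j + n))) powr p"
      using p by (intro powr_mono2) auto
    also have "\<dots> = (W ^ n) powr p * norm (x (j + n)) powr p"
      using W by (simp add: powr_mult)
    finally show ?thesis .
  qed
  have "summable (\<lambda>j. (W ^ n) powr p * norm (x (j + n)) powr p)"
    using xs by (intro summable_mult) (simp add: summable_iff_shift[of "\<lambda>m. norm (x m) powr p" n])
  then have "summable (\<lambda>j. norm ((wshift w ^^ n) x j) powr p)"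
    by (rule summable_comparison_test'[where N=0]) (use le in auto)
  moreover have "(wshift w ^^ n) x 0 = 0" by (simp add: funpow_wshift[where x=x, OF x0])
  ultimately show ?thesis by (simp add: lp_space_def)
qed

lemma lp_summable_diff:
  fixes x y :: "nat \<Rightarrow> 'a::real_normed_vector"
  assumes "0 < p" "x \<in> lp_space p" "y \<in> lp_space p"
  shows "summable (\<lambda>m. norm (x m - y m) powr p)"
  using summable_diff_powr(1)[OF assms(1), of x "\<lambda>_. 0" y] assms by (simp add: lp_space_def)

lemma K_from_shyp:
  fixes w :: "nat \<Rightarrow> nat \<Rightarrow> 'a::real_normed_field"
  assumes p: "1 \<le> p" and wb: "\<And>i \<nu>. i \<in> I \<Longrightarrow> norm (w i \<nu>) \<le> W" and W: "1 \<le> W"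
    and hyp: "lp_s_hypercyclic p I (\<lambda>i. wshift (w i))"
  shows "\<exists>s. \<forall>i\<in>I. C \<le> norm (Rw (w i) s)"
proof -
  have p0: "0 < p" using p by simp
  obtain x where x: "x \<in> lp_space p"
    and h: "\<And>y \<epsilon>. y \<in> lp_space p \<Longrightarrow> \<epsilon> > 0 \<Longrightarrow> \<exists>n. \<forall>i\<in>I. lp_dist p ((wshift (w i) ^^ n) x) y < \<epsilon>"
    using hyp unfolding lp_s_hypercyclic_def by blast
  have x0: "x 0 = 0" and xs: "summable (\<lambda>m. norm (x m) powr p)" using x by (auto simp: lp_space_def)
  define C' where "C' = max C 1"
  define B where "B = lp_norm p x + 1"
  have B0: "0 < B" unfolding B_def lp_norm_def by (simp add: add_nonneg_pos)
  define c where "c = 1 + C' * B"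
  define y :: "nat \<Rightarrow> 'a" where "y = (\<lambda>m. if m = 1 then of_real c else 0)"
  have "summable (\<lambda>m. norm (y m) powr p)"
  proof -
    have "(\<lambda>m. norm (y m) powr p) = (\<lambda>m. if m = 1 then norm (y m) powr p else 0)"
      by (auto simp: y_def)
    then show ?thesis by (simp add: summable_single)
  qed
  then have y: "y \<in> lp_space p" by (simp add: lp_space_def y_def)
  obtain n where n: "\<And>i. i \<in> I \<Longrightarrow> lp_dist p ((wshift (w i) ^^ n) x) y < 1"
    using h[OF y, of 1] by auto
  have "C < norm (Rw (w i) (n + 1))" if i: "i \<in> I" for i
  proof -
    let ?v = "\<lambda>m. (wshift (w i) ^^ n) x m - y m"
    have Tx: "(wshift (w i) ^^ n) x \<in> lp_space p"
      by (rule shift_lp[OF p0 wb[OF i] W x])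
    have "norm (?v 1) \<le> lp_norm p ?v"
      by (rule norm_le_lp_norm[OF p0 lp_summable_diff[OF p0 Tx y]])
    also have "\<dots> < 1" using n[OF i] by (simp add: lp_dist_def)
    finally have v1: "norm (?v 1) < 1" .
    have "?v 1 = Rw (w i) (n + 1) * x (n + 1) - of_real c"
      using Pw_1[of "w i" n] by (simp add: funpow_wshift[where x=x, OF x0] y_def add.commute)
    then have "norm (of_real c :: 'a) - norm (Rw (w i) (n + 1) * x (n + 1)) < 1"
      using v1 norm_triangle_ineq2[of "of_real c :: 'a" "Rw (w i) (n + 1) * x (n + 1)"]
      by (simp add: norm_minus_commute)
    moreover have "c > 0" unfolding c_def C'_def using B0 by (simp add: add_pos_nonneg)
    then have "norm (of_real c :: 'a) = c" by simp
    ultimately have "c - norm (Rw (w i) (n + 1)) * norm (x (n + 1)) < 1"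
      by (simp add: norm_mult)
    then have lt: "C' * B < norm (Rw (w i) (n + 1)) * norm (x (n + 1))"
      by (simp add: c_def)
    have "norm (x (n + 1)) \<le> lp_norm p x" by (rule norm_le_lp_norm[OF p0 xs])
    then have "norm (x (n + 1)) \<le> B" unfolding B_def by simp
    then have "norm (Rw (w i) (n + 1)) * norm (x (n + 1)) \<le> norm (Rw (w i) (n + 1)) * B"
      by (simp add: mult_left_mono)
    with lt have "C' * B < norm (Rw (w i) (n + 1)) * B" by simp
    then have "C' < norm (Rw (w i) (n + 1))" using B0 by simp
    then show ?thesis unfolding C'_def by simp
  qed
  then show ?thesis by (auto intro!: exI[of _ "n + 1"] less_imp_le)
qed


lemma geom_sum_le: "(\<Sum>K\<in>{k0..<M}. (1/2::real)^K) \<le> 2 * (1/2)^k0"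
proof -
  have eq: "(\<Sum>K\<in>{k0..<k0+d}. (1/2::real)^K) = 2 * (1/2)^k0 - 2 * (1/2)^(k0+d)" for d
    by (induction d) (auto simp: algebra_simps)
  show ?thesis
  proof (cases "M \<le> k0")
    case True then show ?thesis by simp
  next
    case False
    then obtain d where "M = k0 + d" by (metis le_add_diff_inverse nat_le_linear)
    then show ?thesis using eq[of d] by simp
  qed
qed

lemma powr_le_small:
  fixes v b p :: real
  assumes "0 \<le> v" "v \<le> b" "b \<le> 1" "1 \<le> p"
  shows "v powr p \<le> b"
proof (cases "v = 0")
  case True then show ?thesis using assms by simp
next
  case False
  then have "v powr p \<le> v" using assms by (intro powr_le_one_le) auto
  then show ?thesis using assms by simp
qed

context
  fixes p :: real and W :: real and I :: "nat set"
    and w :: "nat \<Rightarrow> nat \<Rightarrow> 'a::real_normed_field"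
    and yt :: "nat \<Rightarrow> nat \<Rightarrow> nat \<Rightarrow> 'a"
  assumes p: "1 \<le> p" and W: "1 \<le> W" and wb: "\<And>i \<nu>. i \<in> I \<Longrightarrow> norm (w i \<nu>) \<le> W"
    and Ine: "I \<noteq> {}" and finI: "finite I"
    and Kp: "\<And>C. \<exists>s. \<forall>i\<in>I. C \<le> norm (Rw (w i) s)"
    and yt0: "\<And>i K j. j = 0 \<or> K < j \<Longrightarrow> yt i K j = 0"
begin

definition "Yb K = 1 + (\<Sum>i\<in>I. \<Sum>j\<le>K. norm (yt i K j))"
definition "bb K = (1/2::real)^K / (real K + 1)"
definition "Pr K sp s \<longleftrightarrow> K + sp + 1 \<le> s \<and> (\<forall>i\<in>I. W^(K+sp) * Yb K / bb K \<le> norm (Rw (w i) s))"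
definition "sq = rec_nat (SOME s. Pr 0 0 s) (\<lambda>K sp. SOME s. Pr (Suc K) sp s)"
definition "spv K = (case K of 0 \<Rightarrow> 0 | Suc k \<Rightarrow> sq k)"
definition "nq K = sq K - K"
definition "xv i m = (\<Sum>K<m. if nq K < m \<and> m \<le> sq K then Rw (w i) (m - nq K) * yt i K (m - nq K) / Rw (w i) m else 0)"
definition "beta k0 m = (\<Sum>K\<in>{k0..<m}. if nq K < m \<and> m \<le> sq K then bb K else 0)"

lemma bb_pos: "0 < bb K" by (simp add: bb_def)
lemma bb_le1: "bb K \<le> 1"
proof -
  have "(1/2::real)^K \<le> 1" by (simp add: power_le_one)
  also have "1 \<le> real K + 1" by simp
  finally show ?thesis unfolding bb_def by (simp add: divide_le_eq)
qed
lemma Kbb: "real K * bb K \<le> (1/2)^K"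
proof -
  have "real K * bb K = (1/2)^K * (real K / (real K + 1))" by (simp add: bb_def)
  also have "\<dots> \<le> (1/2)^K * 1" by (intro mult_left_mono) auto
  finally show ?thesis by simp
qed

lemma Yb_ge: assumes "i \<in> I" shows "norm (yt i K j) \<le> Yb K"
proof (cases "j \<le> K")
  case True
  have "norm (yt i K j) \<le> (\<Sum>j\<le>K. norm (yt i K j))"
    by (rule member_le_sum) (use True in auto)
  also have "\<dots> \<le> (\<Sum>i\<in>I. \<Sum>j\<le>K. norm (yt i K j))"
    by (rule member_le_sum) (use assms finI in \<open>auto intro: sum_nonneg\<close>)
  finally show ?thesis unfolding Yb_def by simp
next
  case False
  then have "yt i K j = 0" using yt0 by simp
  moreover have "0 \<le> (\<Sum>i\<in>I. \<Sum>j\<le>K. norm (yt i K j))" by (intro sum_nonneg) auto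
  ultimately show ?thesis unfolding Yb_def by simp
qed

lemma Yb_pos: "0 < Yb K"
proof -
  have "0 \<le> (\<Sum>i\<in>I. \<Sum>j\<le>K. norm (yt i K j))" by (intro sum_nonneg) auto
  then show ?thesis unfolding Yb_def by simp
qed

lemma Pr_ex: "\<exists>s. Pr K sp s"
proof -
  define C where "C = max (W^(K+sp) * Yb K / bb K) (W^(K+sp+1) + 1)"
  obtain s where s: "\<forall>i\<in>I. C \<le> norm (Rw (w i) s)" using Kp by blast
  obtain i where i: "i \<in> I" using Ine by blast
  have "K + sp + 1 \<le> s"
  proof (rule ccontr)
    assume "\<not> ?thesis" then have sl: "s \<le> K + sp + 1" by simp
    have "norm (Rw (w i) s) \<le> W ^ s" using norm_Rw_le[where w="w i", OF wb[OF i] W] by blast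
    also have "\<dots> \<le> W ^ (K + sp + 1)" by (rule power_increasing[OF sl W])
    also have "\<dots> < C" unfolding C_def by simp
    finally show False using s i by auto
  qed
  with s show ?thesis unfolding Pr_def C_def by auto
qed

lemma Pr_sq: "Pr K (spv K) (sq K)"
proof (cases K)
  case 0 then show ?thesis by (simp add: sq_def spv_def someI_ex[OF Pr_ex])
next
  case (Suc k)
  have "sq (Suc k) = (SOME s. Pr (Suc k) (sq k) s)" by (simp add: sq_def)
  then show ?thesis using Suc by (simp add: spv_def someI_ex[OF Pr_ex])
qed

lemma sq_ge: "K + spv K + 1 \<le> sq K" using Pr_sq[of K] by (simp add: Pr_def)
lemma R_big: "i \<in> I \<Longrightarrow> W^(K + spv K) * Yb K / bb K \<le> norm (Rw (w i) (sq K))"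
  using Pr_sq[of K] by (simp add: Pr_def)
lemma sq_nq: "sq K = nq K + K" using sq_ge[of K] by (simp add: nq_def)
lemma spv_lt_nq: "spv K < nq K" using sq_ge[of K] by (simp add: nq_def)
lemma sq_lt_nq_Suc: "sq k < nq (Suc k)" using spv_lt_nq[of "Suc k"] by (simp add: spv_def)
lemma nq_smono: "strict_mono nq"
  by (rule strict_monoI_Suc) (metis le_add1 le_less_trans sq_lt_nq_Suc sq_nq)
lemma nq_ge: "K \<le> nq K" using strict_mono_imp_increasing[OF nq_smono] by blast
lemma sq_lt_nq: "k < K \<Longrightarrow> sq k < nq K"
  by (metis Suc_leI less_le_trans nq_smono sq_lt_nq_Suc strict_mono_less_eq)
lemma blk_unique:
  assumes "nq K < m" "m \<le> sq K" "nq K' < m" "m \<le> sq K'" shows "K = K'"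
proof (rule ccontr)
  assume "K \<noteq> K'"
  then have "K < K' \<or> K' < K" by auto
  then show False using sq_lt_nq[of K K'] sq_lt_nq[of K' K] assms by auto
qed
lemma nq_le_spv: "k < K \<Longrightarrow> nq k \<le> spv K"
proof -
  assume "k < K"
  then obtain K0 where K: "K = Suc K0" "k \<le> K0" by (cases K) auto
  have "nq k \<le> nq K0" using K(2) nq_smono strict_mono_less_eq by blast
  also have "\<dots> \<le> sq K0" using sq_nq[of K0] by simp
  finally show ?thesis using K by (simp add: spv_def)
qed

lemma est:
  assumes i: "i \<in> I" and m: "nq K < m" "m \<le> sq K" and t: "t \<le> spv K" "t < m"
  shows "Rw (w i) (m - t) \<noteq> 0"
    and "norm (Rw (w i) (m - nq K) * yt i K (m - nq K) / Rw (w i) (m - t)) \<le> bb K"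
proof -
  define s where "s = sq K"
  define a where "a = m - t"
  define j where "j = m - nq K"
  define G where "G = W^(K + spv K) * Yb K / bb K"
  have G0: "0 < G" unfolding G_def using W Yb_pos bb_pos by simp
  have as: "a \<le> s" unfolding a_def s_def using m by simp
  have ar: "j + (s - a) = K + t" unfolding a_def s_def j_def using m t sq_nq[of K] by simp
  have hR: "norm (Rw (w i) s) \<le> norm (Rw (w i) a) * W^(s - a)"
    by (rule norm_Rw_mono[where w="w i", OF wb[OF i] W as])
  have GR: "G \<le> norm (Rw (w i) s)" unfolding G_def s_def by (rule R_big[OF i])
  have Wp: "0 < W^(s - a)" using W by simp
  have Ra: "0 < norm (Rw (w i) a)"
  proof (rule ccontr)
    assume "\<not> ?thesis"
    then have "norm (Rw (w i) a) = 0" by simp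
    then show False using hR GR G0 by simp
  qed
  then show "Rw (w i) (m - t) \<noteq> 0" unfolding a_def by auto
  have h1: "norm (Rw (w i) j) \<le> W ^ j" by (rule norm_Rw_le[where w="w i", OF wb[OF i] W])
  have h2: "norm (yt i K j) \<le> Yb K" by (rule Yb_ge[OF i])
  have "W ^ j * W^(s - a) \<le> W^(K + spv K)"
    unfolding power_add[symmetric] ar by (rule power_increasing) (use t W in auto)
  then have "W ^ j * Yb K * W^(s - a) \<le> W^(K + spv K) * Yb K"
    using Yb_pos[of K] by (simp add: mult_right_mono algebra_simps)
  also have "\<dots> = bb K * G" unfolding G_def using bb_pos[of K] by simp
  also have "\<dots> \<le> bb K * (norm (Rw (w i) a) * W^(s - a))"
    using GR hR bb_pos[of K] by (intro mult_left_mono) auto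
  finally have "W ^ j * Yb K \<le> bb K * norm (Rw (w i) a)"
    using Wp by (simp add: mult.assoc)
  moreover have "norm (Rw (w i) j) * norm (yt i K j) \<le> W ^ j * Yb K"
    using h1 h2 W by (intro mult_mono) auto
  ultimately have "norm (Rw (w i) j) * norm (yt i K j) \<le> bb K * norm (Rw (w i) a)" by linarith
  then show "norm (Rw (w i) (m - nq K) * yt i K (m - nq K) / Rw (w i) (m - t)) \<le> bb K"
    using Ra unfolding a_def[symmetric] j_def[symmetric]
    by (simp add: norm_mult norm_divide divide_le_eq)
qed


lemma xv_blk:
  assumes "nq K < m" "m \<le> sq K"
  shows "xv i m = Rw (w i) (m - nq K) * yt i K (m - nq K) / Rw (w i) m"
proof -
  have Km: "K < m" using nq_ge[of K] assms by simp
  have "xv i m = (\<Sum>K'<m. if K' = K then Rw (w i) (m - nq K) * yt i K (m - nq K) / Rw (w i) m else 0)"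
    unfolding xv_def by (rule sum.cong) (use assms blk_unique in auto)
  also have "\<dots> = Rw (w i) (m - nq K) * yt i K (m - nq K) / Rw (w i) m"
    using Km by simp
  finally show ?thesis .
qed

lemma xv_none: "(\<And>K. \<not> (nq K < m \<and> m \<le> sq K)) \<Longrightarrow> xv i m = 0"
  unfolding xv_def by (auto intro!: sum.neutral)

lemma xv_0: "xv i 0 = 0" unfolding xv_def by simp

lemma beta_nonneg: "0 \<le> beta k0 m"
  unfolding beta_def by (intro sum_nonneg) (auto intro: less_imp_le[OF bb_pos])

lemma beta_ge: assumes "nq K < m" "m \<le> sq K" "k0 \<le> K" shows "bb K \<le> beta k0 m"
proof -
  have Km: "K < m" using nq_ge[of K] assms by simp
  have "bb K = (if nq K < m \<and> m \<le> sq K then bb K else 0)" using assms by simp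
  also have "\<dots> \<le> beta k0 m" unfolding beta_def
    by (rule member_le_sum[where f="\<lambda>K. if nq K < m \<and> m \<le> sq K then bb K else 0"])
       (use Km assms in \<open>auto intro: less_imp_le[OF bb_pos]\<close>)
  finally show ?thesis .
qed

lemma beta_sum: "(\<Sum>m<M. beta k0 m) \<le> 2 * (1/2)^k0"
proof -
  define g where "g K m = (if nq K < m \<and> m \<le> sq K then bb K else 0)" for K m
  have "(\<Sum>m<M. beta k0 m) = (\<Sum>m<M. \<Sum>K<M. if K \<in> {k0..<m} then g K m else 0)"
  proof (rule sum.cong[OF refl])
    fix m assume "m \<in> {..<M}"
    then have sub: "{..<M} \<inter> {k0..<m} = {k0..<m}" by auto
    have "beta k0 m = (\<Sum>K\<in>{..<M} \<inter> {k0..<m}. g K m)" unfolding sub beta_def g_def ..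
    also have "\<dots> = (\<Sum>K<M. if K \<in> {k0..<m} then g K m else 0)"
      using sum.inter_restrict[of "{..<M}" "\<lambda>K. g K m" "{k0..<m}"] by simp
    finally show "beta k0 m = (\<Sum>K<M. if K \<in> {k0..<m} then g K m else 0)" .
  qed
  also have "\<dots> = (\<Sum>K<M. \<Sum>m<M. if K \<in> {k0..<m} then g K m else 0)" by (rule sum.swap)
  also have "\<dots> \<le> (\<Sum>K<M. if k0 \<le> K then (1/2)^K else 0)"
  proof (rule sum_mono)
    fix K assume "K \<in> {..<M}"
    show "(\<Sum>m<M. if K \<in> {k0..<m} then g K m else 0) \<le> (if k0 \<le> K then (1/2)^K else 0)"
    proof (cases "k0 \<le> K")
      case False then show ?thesis by simp
    next
      case True
      have "(\<Sum>m<M. if K \<in> {k0..<m} then g K m else 0) \<le> (\<Sum>m<M. if m \<in> {nq K<..sq K} then bb K else 0)"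
        by (rule sum_mono) (auto simp: g_def intro: less_imp_le[OF bb_pos])
      also have "\<dots> = (\<Sum>m\<in>{..<M} \<inter> {nq K<..sq K}. bb K)"
        using sum.inter_restrict[of "{..<M}" "\<lambda>m. bb K" "{nq K<..sq K}"] by simp
      also have "\<dots> = real (card ({..<M} \<inter> {nq K<..sq K})) * bb K" by simp
      also have "\<dots> \<le> real (card {nq K<..sq K}) * bb K"
      proof -
        have "card ({..<M} \<inter> {nq K<..sq K}) \<le> card {nq K<..sq K}" by (rule card_mono) auto
        then show ?thesis by (intro mult_right_mono) (auto intro: less_imp_le[OF bb_pos])
      qed
      also have "\<dots> = real K * bb K" using sq_nq[of K] by simp
      also have "\<dots> \<le> (1/2)^K" by (rule Kbb)
      finally show ?thesis using True by simp
    qed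
  qed
  also have "\<dots> = (\<Sum>K\<in>{..<M} \<inter> {k0..}. (1/2::real)^K)"
    by (subst sum.inter_restrict) auto
  also have "{..<M} \<inter> {k0..} = {k0..<M}" by auto
  also have "(\<Sum>K\<in>{k0..<M}. (1/2::real)^K) \<le> 2 * (1/2)^k0" by (rule geom_sum_le)
  finally show ?thesis .
qed

lemma beta_sum_shift: "(\<Sum>j<M. beta k0 (j + c)) \<le> 2 * (1/2)^k0"
proof -
  have "(\<Sum>j<M. beta k0 (j + c)) = (\<Sum>m\<in>{0 + c..<M + c}. beta k0 m)"
    using sum.shift_bounds_nat_ivl[of "beta k0" 0 c M] by (simp add: lessThan_atLeast0)
  also have "\<dots> \<le> (\<Sum>m<M + c. beta k0 m)"
    by (rule sum_mono2) (auto simp: beta_nonneg)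
  also have "\<dots> \<le> 2 * (1/2)^k0" by (rule beta_sum)
  finally show ?thesis .
qed

lemma xv_le: assumes i: "i \<in> I" shows "norm (xv i m) powr p \<le> beta 0 m"
proof (cases "\<exists>K. nq K < m \<and> m \<le> sq K")
  case True
  then obtain K where K: "nq K < m" "m \<le> sq K" by blast
  have "norm (xv i m) \<le> bb K"
    using est(2)[OF i K, of 0] K by (simp add: xv_blk[OF K])
  then have "norm (xv i m) powr p \<le> bb K"
    using bb_le1[of K] p by (intro powr_le_small) auto
  also have "\<dots> \<le> beta 0 m" by (rule beta_ge[OF K]) simp
  finally show ?thesis .
next
  case False
  then have "xv i m = 0" by (intro xv_none) auto
  then show ?thesis by (simp add: beta_nonneg)
qed

lemma xv_lp: assumes i: "i \<in> I" shows "xv i \<in> lp_space p"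
proof -
  have "summable (\<lambda>m. norm (xv i m) powr p)"
  proof (rule summableI_nonneg_bounded)
    fix M
    have "(\<Sum>m<M. norm (xv i m) powr p) \<le> (\<Sum>m<M. beta 0 m)"
      by (rule sum_mono) (rule xv_le[OF i])
    also have "\<dots> \<le> 2 * (1/2)^0" by (rule beta_sum)
    finally show "(\<Sum>m<M. norm (xv i m) powr p) \<le> 2" by simp
  qed simp
  then show ?thesis by (simp add: lp_space_def xv_0)
qed

lemma err_le:
  assumes i: "i \<in> I"
  shows "norm ((wshift (w i) ^^ nq K) (xv i) j - yt i K j) powr p \<le> beta (Suc K) (j + nq K)"
proof -
  have T: "(wshift (w i) ^^ nq K) (xv i) = (\<lambda>j. if j = 0 then 0 else Pw (w i) j (nq K) * xv i (j + nq K))"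
    by (rule funpow_wshift) (rule xv_0)
  consider "j = 0" | "1 \<le> j" "j \<le> K" | "K < j" by linarith
  then show ?thesis
  proof cases
    case 1 then show ?thesis using yt0 p by (simp add: T beta_nonneg)
  next
    case 2
    let ?m = "j + nq K"
    have K: "nq K < ?m" "?m \<le> sq K" using 2 sq_nq[of K] by auto
    have R0: "Rw (w i) ?m \<noteq> 0" using est(1)[OF i K, of 0] 2 by simp
    have "Pw (w i) j (nq K) * xv i ?m = (Rw (w i) j * Pw (w i) j (nq K)) * yt i K j / Rw (w i) ?m"
      by (simp add: xv_blk[OF K])
    also have "\<dots> = yt i K j" using Rw_mult_Pw[where w="w i" and j=j and n="nq K"] 2 R0 by simp
    finally show ?thesis using 2 p by (simp add: T beta_nonneg)
  next
    case 3
    let ?m = "j + nq K"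
    have ytz: "yt i K j = 0" using 3 yt0 by simp
    show ?thesis
    proof (cases "\<exists>K'. nq K' < ?m \<and> ?m \<le> sq K'")
      case False
      then have "xv i ?m = 0" by (intro xv_none) auto
      then show ?thesis using 3 ytz p by (simp add: T beta_nonneg)
    next
      case True
      then obtain K' where K': "nq K' < ?m" "?m \<le> sq K'" by blast
      have KK': "K < K'"
      proof (rule ccontr)
        assume "\<not> K < K'"
        then have "K' \<le> K" by simp
        then have "sq K' \<le> sq K"
          by (metis le_less sq_lt_nq less_imp_le_nat order.trans sq_nq le_add1)
        then show False using K' 3 sq_nq[of K] by simp
      qed
      have t: "nq K \<le> spv K'" by (rule nq_le_spv[OF KK'])
      have tm: "nq K < ?m" using 3 by simp
      have mt: "?m - nq K = j" by simp
      have Rj: "Rw (w i) j \<noteq> 0" using est(1)[OF i K' t tm] by simp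
      have "(wshift (w i) ^^ nq K) (xv i) j = Pw (w i) j (nq K) * (Rw (w i) (?m - nq K') * yt i K' (?m - nq K') / Rw (w i) ?m)"
        using 3 by (simp add: T xv_blk[OF K'])
      also have "\<dots> = Rw (w i) (?m - nq K') * yt i K' (?m - nq K') / Rw (w i) j"
      proof -
        have e: "Rw (w i) ?m = Rw (w i) j * Pw (w i) j (nq K)"
          using Rw_mult_Pw[where w="w i" and j=j and n="nq K"] 3 by simp
        have "Pw (w i) j (nq K) \<noteq> 0" using est(1)[OF i K', of 0] e K' 3 by auto
        then show ?thesis unfolding e using Rj by (simp add: field_simps)
      qed
      finally have eq: "(wshift (w i) ^^ nq K) (xv i) j = Rw (w i) (?m - nq K') * yt i K' (?m - nq K') / Rw (w i) (?m - nq K)"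
        by simp
      have "norm ((wshift (w i) ^^ nq K) (xv i) j - yt i K j) \<le> bb K'"
        unfolding eq ytz using est(2)[OF i K' t tm] by simp
      then have "norm ((wshift (w i) ^^ nq K) (xv i) j - yt i K j) powr p \<le> bb K'"
        using bb_le1[of K'] p by (intro powr_le_small) auto
      also have "\<dots> \<le> beta (Suc K) ?m" by (rule beta_ge[OF K']) (use KK' in simp)
      finally show ?thesis .
    qed
  qed
qed

lemma err_sum:
  assumes i: "i \<in> I"
  shows "summable (\<lambda>j. norm ((wshift (w i) ^^ nq K) (xv i) j - yt i K j) powr p)"
    and "(\<Sum>j. norm ((wshift (w i) ^^ nq K) (xv i) j - yt i K j) powr p) \<le> (1/2)^K"
proof -
  have b: "(\<Sum>j<M. norm ((wshift (w i) ^^ nq K) (xv i) j - yt i K j) powr p) \<le> (1/2)^K" for M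
  proof -
    have "(\<Sum>j<M. norm ((wshift (w i) ^^ nq K) (xv i) j - yt i K j) powr p) \<le> (\<Sum>j<M. beta (Suc K) (j + nq K))"
      by (rule sum_mono) (rule err_le[OF i])
    also have "\<dots> \<le> 2 * (1/2)^Suc K" by (rule beta_sum_shift)
    finally show ?thesis by simp
  qed
  show s: "summable (\<lambda>j. norm ((wshift (w i) ^^ nq K) (xv i) j - yt i K j) powr p)"
    by (rule summableI_nonneg_bounded[OF _ b]) simp
  show "(\<Sum>j. norm ((wshift (w i) ^^ nq K) (xv i) j - yt i K j) powr p) \<le> (1/2)^K"
    by (rule suminf_le_const[OF s b])
qed


lemma construction:
  "\<exists>x n. (\<forall>i\<in>I. x i \<in> lp_space p) \<and>
     (\<forall>K. \<forall>i\<in>I. summable (\<lambda>j. norm ((wshift (w i) ^^ n K) (x i) j - yt i K j) powr p) \<and>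
        (\<Sum>j. norm ((wshift (w i) ^^ n K) (x i) j - yt i K j) powr p) \<le> (1/2)^K)"
  using xv_lp err_sum by blast

end

lemma aux_half: "(x::real) \<noteq> 0 \<Longrightarrow> x * (e / (2 * x)) = e / 2" by (simp add: field_simps)

definition tgt :: "'a list list \<Rightarrow> nat \<Rightarrow> nat \<Rightarrow> 'a::zero" where
  "tgt c i j = (if i < length c \<and> 1 \<le> j \<and> j \<le> length (c!i) then c!i!(j-1) else 0)"

lemma density:
  fixes y :: "nat \<Rightarrow> nat \<Rightarrow> 'a::real_normed_vector"
  assumes p: "0 < p" and finI: "finite I" and y: "\<And>i. i \<in> I \<Longrightarrow> y i \<in> lp_space p" and eta: "0 < \<eta>"
    and D: "\<And>X. open X \<Longrightarrow> X \<noteq> {} \<Longrightarrow> \<exists>d\<in>D. d \<in> X"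
  shows "\<exists>L c. c \<in> lists (lists D) \<and> (\<forall>i\<in>I. \<forall>j. L < j \<longrightarrow> tgt c i j = 0) \<and>
     (\<forall>i\<in>I. summable (\<lambda>m. norm (tgt c i m - y i m) powr p) \<and> (\<Sum>m. norm (tgt c i m - y i m) powr p) < \<eta>)"
proof -
  define f where "f i m = norm (y i m) powr p" for i m
  have fs: "summable (f i)" if "i \<in> I" for i using y[OF that] unfolding lp_space_def f_def by simp
  have "\<forall>i\<in>I. eventually (\<lambda>k. norm (\<Sum>m. f i (m + k)) < \<eta>/2) sequentially"
  proof
    fix i assume i: "i \<in> I"
    obtain N where "\<forall>n\<ge>N. norm (\<Sum>m. f i (m + n)) < \<eta>/2"
      using suminf_exist_split[OF _ fs[OF i], of "\<eta>/2"] eta by auto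
    then show "eventually (\<lambda>k. norm (\<Sum>m. f i (m + k)) < \<eta>/2) sequentially"
      unfolding eventually_sequentially by blast
  qed
  then have "eventually (\<lambda>k. \<forall>i\<in>I. norm (\<Sum>m. f i (m + k)) < \<eta>/2) sequentially"
    by (rule eventually_ball_finite[OF finI])
  then obtain L where L: "\<And>i. i \<in> I \<Longrightarrow> norm (\<Sum>m. f i (m + Suc L)) < \<eta>/2"
    unfolding eventually_sequentially by (meson le_SucI order_refl)
  define r0 where "r0 = (\<eta> / (2 * (real L + 1))) powr (1/p)"
  have r0: "0 < r0" unfolding r0_def using eta by simp
  have ex: "\<exists>d. d \<in> D \<and> dist (y i j) d < r0" for i j
    using D[of "ball (y i j) r0"] r0 by auto
  define d where "d i j = (SOME d. d \<in> D \<and> dist (y i j) d < r0)" for i j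
  have d: "d i j \<in> D" "dist (y i j) (d i j) < r0" for i j
    using someI_ex[OF ex[of i j]] unfolding d_def by auto
  obtain Mx where Mx: "I \<subseteq> {..<Mx}" using finite_nat_bounded[OF finI] by blast
  define c where "c = map (\<lambda>i. map (\<lambda>j. d i (Suc j)) [0..<L]) [0..<Mx]"
  have cD: "c \<in> lists (lists D)" unfolding c_def using d by auto
  have tc: "tgt c i j = (if 1 \<le> j \<and> j \<le> L then d i j else 0)" if i: "i \<in> I" for i j
  proof -
    have "i < Mx" using Mx i by auto
    then show ?thesis unfolding tgt_def c_def by auto
  qed
  have main: "summable (\<lambda>m. norm (tgt c i m - y i m) powr p) \<and> (\<Sum>m. norm (tgt c i m - y i m) powr p) < \<eta>"
    if i: "i \<in> I" for i
  proof -
    define g where "g m = norm (tgt c i m - y i m) powr p" for m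
    have y0: "y i 0 = 0" using y[OF i] by (simp add: lp_space_def)
    have gtail: "g (m + Suc L) = f i (m + Suc L)" for m
      by (simp add: g_def f_def tc[OF i])
    have gs: "summable g"
    proof -
      have "summable (\<lambda>m. f i (m + Suc L))" using fs[OF i] summable_iff_shift[of "f i" "Suc L"] by blast
      then show ?thesis unfolding gtail[symmetric] using summable_iff_shift[of g "Suc L"] by blast
    qed
    have dummy: True by simp
    have ghead: "g m \<le> \<eta> / (2 * (real L + 1))" if m: "m < Suc L" for m
    proof (cases "m = 0")
      case True then show ?thesis using p eta by (simp add: g_def tc[OF i] y0)
    next
      case False
      then have "tgt c i m = d i m" using m by (simp add: tc[OF i])
      then have "norm (tgt c i m - y i m) \<le> r0" using d(2)[of i m] by (simp add: dist_norm norm_minus_commute)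
      then have "g m \<le> r0 powr p" unfolding g_def using p by (intro powr_mono2) auto
      also have "\<dots> = \<eta> / (2 * (real L + 1))" unfolding r0_def using p eta by (simp add: powr_powr)
      finally show ?thesis .
    qed
    have "(\<Sum>m<Suc L. g m) \<le> (\<Sum>m<Suc L. \<eta> / (2 * (real L + 1)))" by (rule sum_mono) (use ghead in auto)
    also have "\<dots> = (real L + 1) * (\<eta> / (2 * (real L + 1)))" by simp
    also have "\<dots> = \<eta> / 2" by (rule aux_half) simp
    finally have h: "(\<Sum>m<Suc L. g m) \<le> \<eta> / 2" .
    have "(\<Sum>m. g (m + Suc L)) = (\<Sum>m. f i (m + Suc L))" unfolding gtail ..
    also have "\<dots> < \<eta> / 2" using L[OF i] by simp
    finally have t: "(\<Sum>m. g (m + Suc L)) < \<eta> / 2" .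
    have "suminf g = (\<Sum>m. g (m + Suc L)) + (\<Sum>m<Suc L. g m)" by (rule suminf_split_initial_segment[OF gs])
    then have "suminf g < \<eta>" using h t by simp
    then show ?thesis using gs unfolding g_def by (intro conjI)
  qed
  have "\<forall>i\<in>I. \<forall>j. L < j \<longrightarrow> tgt c i j = 0" using tc by simp
  then show ?thesis using cD main by (intro exI[of _ L] exI[of _ c]) simp
qed


lemma dsum_main:
  fixes w :: "nat \<Rightarrow> nat \<Rightarrow> 'a::{real_normed_field, second_countable_topology}"
  assumes p: "1 \<le> p" and finI: "finite I" and Ine: "I \<noteq> {}"
    and bnd: "\<forall>i\<in>I. bounded (range (w i))"
    and hyp: "lp_s_hypercyclic p I (\<lambda>i. wshift (w i))"
  shows "lp_dsum_hypercyclic p I (\<lambda>i. wshift (w i))"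
proof -
  have p0: "0 < p" using p by simp
  have "bounded (\<Union>i\<in>I. range (w i))" using bnd finI by (intro bounded_UN) auto
  then obtain W0 where W0: "\<And>z. z \<in> (\<Union>i\<in>I. range (w i)) \<Longrightarrow> norm z \<le> W0"
    unfolding bounded_iff by blast
  define W where "W = max W0 1"
  have W: "1 \<le> W" unfolding W_def by simp
  have wb: "norm (w i \<nu>) \<le> W" if "i \<in> I" for i \<nu>
  proof -
    have "w i \<nu> \<in> (\<Union>i\<in>I. range (w i))" using that by blast
    then have "norm (w i \<nu>) \<le> W0" by (rule W0)
    then show ?thesis unfolding W_def by linarith
  qed
  have Kp: "\<exists>s. \<forall>i\<in>I. C \<le> norm (Rw (w i) s)" for C
    by (rule K_from_shyp[where p=p and I=I and w=w and W=W, OF p wb W hyp])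
  obtain D :: "'a set" where Dc: "countable D" and D: "\<And>X. open X \<Longrightarrow> X \<noteq> {} \<Longrightarrow> \<exists>d\<in>D. d \<in> X"
    by (metis countable_dense_setE)
  define Codes where "Codes = lists (lists D)"
  have Cc: "countable Codes" unfolding Codes_def using Dc by simp
  define cd where "cd K = from_nat_into Codes (fst (prod_decode K))" for K
  define yt where "yt i K j = (if j \<le> K then tgt (cd K) i j else 0)" for i K j
  have yt0: "yt i K j = 0" if "j = 0 \<or> K < j" for i K j
    using that unfolding yt_def tgt_def by auto
  from construction[where p=p and W=W and I=I and w=w and yt=yt, OF p W wb Ine finI Kp yt0] obtain x n where x0: "\<forall>i\<in>I. x i \<in> lp_space p"
    and err0: "\<forall>K. \<forall>i\<in>I. summable (\<lambda>j. norm ((wshift (w i) ^^ n K) (x i) j - yt i K j) powr p) \<and>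
        (\<Sum>j. norm ((wshift (w i) ^^ n K) (x i) j - yt i K j) powr p) \<le> (1/2)^K"
    by blast
  have x: "\<And>i. i \<in> I \<Longrightarrow> x i \<in> lp_space p" using x0 by simp
  have err: "\<And>K i. i \<in> I \<Longrightarrow> summable (\<lambda>j. norm ((wshift (w i) ^^ n K) (x i) j - yt i K j) powr p)"
    "\<And>K i. i \<in> I \<Longrightarrow> (\<Sum>j. norm ((wshift (w i) ^^ n K) (x i) j - yt i K j) powr p) \<le> (1/2)^K"
    using err0 by simp_all
  show ?thesis
    unfolding lp_dsum_hypercyclic_def
  proof (intro exI[of _ x] conjI allI impI ballI)
    fix i assume "i \<in> I" then show "x i \<in> lp_space p" by (rule x)
  next
    fix y :: "nat \<Rightarrow> nat \<Rightarrow> 'a" and \<epsilon> :: real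
    assume y: "\<forall>i\<in>I. y i \<in> lp_space p" and e: "0 < \<epsilon>"
    define \<eta> where "\<eta> = \<epsilon> powr p / (2 * 2 powr p)"
    have eta: "0 < \<eta>" unfolding \<eta>_def using e by simp
    have yy: "\<And>i. i \<in> I \<Longrightarrow> y i \<in> lp_space p" using y by simp
    from density[where p=p and I=I and y=y and D=D and \<eta>=\<eta>, OF p0 finI yy eta D] obtain L c where c0: "c \<in> lists (lists D)"
      and cL0: "\<forall>i\<in>I. \<forall>j. L < j \<longrightarrow> tgt c i j = 0"
      and cm0: "\<forall>i\<in>I. summable (\<lambda>m. norm (tgt c i m - y i m) powr p) \<and> (\<Sum>m. norm (tgt c i m - y i m) powr p) < \<eta>"
      by blast
    have c: "c \<in> Codes" using c0 unfolding Codes_def .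
    have cL: "\<And>i j. i \<in> I \<Longrightarrow> L < j \<Longrightarrow> tgt c i j = 0" using cL0 by simp
    have cs: "\<And>i. i \<in> I \<Longrightarrow> summable (\<lambda>m. norm (tgt c i m - y i m) powr p)" using cm0 by simp
    have cl: "\<And>i. i \<in> I \<Longrightarrow> (\<Sum>m. norm (tgt c i m - y i m) powr p) < \<eta>" using cm0 by simp
    obtain q where q: "from_nat_into Codes q = c" using from_nat_into_surj[OF Cc c] by blast
    obtain r where r: "(1/2::real)^r < \<eta>" using real_arch_pow_inv[OF eta, of "1/2"] by auto
    define K where "K = prod_encode (q, max r L)"
    have KrL: "max r L \<le> K" unfolding K_def by (rule le_prod_encode_2)
    have cdK: "cd K = c" unfolding cd_def K_def by (simp add: q)
    have ytK: "yt i K = tgt c i" if i: "i \<in> I" for i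
    proof
      fix j show "yt i K j = tgt c i j"
        using KrL cL[OF i, of j] unfolding yt_def cdK by auto
    qed
    have hK: "(1/2::real)^K < \<eta>"
    proof -
      have rK: "r \<le> K" using KrL by simp
      have "(1/2::real)^K \<le> (1/2)^r" by (rule power_decreasing[OF rK]) auto
      then show ?thesis using r by linarith
    qed
    show "\<exists>n. \<forall>i\<in>I. lp_dist p (((\<lambda>i. wshift (w i)) i ^^ n) (x i)) (y i) < \<epsilon>"
    proof (intro exI[of _ "n K"] ballI)
      fix i assume i: "i \<in> I"
      let ?a = "(wshift (w i) ^^ n K) (x i)"
      have s1: "summable (\<lambda>m. norm (?a m - tgt c i m) powr p)" using err(1)[OF i, of K] ytK[OF i] by simp
      have l1: "(\<Sum>m. norm (?a m - tgt c i m) powr p) \<le> (1/2)^K" using err(2)[OF i, of K] ytK[OF i] by simp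
      have s: "summable (\<lambda>m. norm (?a m - y i m) powr p)"
        by (rule summable_diff_powr(1)[OF p0 s1 cs[OF i]])
      have "(\<Sum>m. norm (?a m - y i m) powr p) \<le> 2 powr p * ((\<Sum>m. norm (?a m - tgt c i m) powr p) + (\<Sum>m. norm (tgt c i m - y i m) powr p))"
        by (rule summable_diff_powr(2)[OF p0 s1 cs[OF i]])
      also have "\<dots> < 2 powr p * (\<eta> + \<eta>)"
        using l1 hK cl[OF i] by (intro mult_strict_left_mono) auto
      also have "\<dots> = \<epsilon> powr p" unfolding \<eta>_def by simp
      finally have "(\<Sum>m. norm (?a m - y i m) powr p) < \<epsilon> powr p" .
      then show "lp_dist p (((\<lambda>i. wshift (w i)) i ^^ n K) (x i)) (y i) < \<epsilon>"
        using lp_dist_less[OF p0 e _ s] by simp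
    qed
  qed
qed

theorem corollary3p8:
  fixes p :: real and N :: nat
    and wr :: "nat \<Rightarrow> nat \<Rightarrow> real" and wc :: "nat \<Rightarrow> nat \<Rightarrow> complex"
  assumes "1 \<le> p" and "2 \<le> N"
  shows "((\<forall>i\<in>{1..N}. bounded (range (wr i))) \<and>
           lp_s_hypercyclic p {1..N} (\<lambda>i. wshift (wr i))
           \<longrightarrow> lp_dsum_hypercyclic p {1..N} (\<lambda>i. wshift (wr i)))
       \<and> ((\<forall>i\<in>{1..N}. bounded (range (wc i))) \<and>
           lp_s_hypercyclic p {1..N} (\<lambda>i. wshift (wc i))
           \<longrightarrow> lp_dsum_hypercyclic p {1..N} (\<lambda>i. wshift (wc i)))"
proof -
  have ne: "{1..N} \<noteq> {}" using assms(2) by simp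
  have r: "(\<forall>i\<in>{1..N}. bounded (range (wr i))) \<Longrightarrow> lp_s_hypercyclic p {1..N} (\<lambda>i. wshift (wr i))
           \<Longrightarrow> lp_dsum_hypercyclic p {1..N} (\<lambda>i. wshift (wr i))"
    by (rule dsum_main[OF assms(1) finite_atLeastAtMost ne])
  have c: "(\<forall>i\<in>{1..N}. bounded (range (wc i))) \<Longrightarrow> lp_s_hypercyclic p {1..N} (\<lambda>i. wshift (wc i))
           \<Longrightarrow> lp_dsum_hypercyclic p {1..N} (\<lambda>i. wshift (wc i))"
    by (rule dsum_main[OF assms(1) finite_atLeastAtMost ne])
  show ?thesis using r c by blast
qed

end
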